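(* Let $n\ge 10$ be an integer and let $\mathcal{F}_n=\{\,|E(F_n(a,b))| : a,b \text{ integers},\ a\ge 0,\ b\ge 2,\ a+b+5\le n\,\}$. Then $$\left[3n-11, \left\lfloor \frac{n-1}{2} \right\rfloor \left\lceil \frac{n-1}{2} \right\rceil +2\right]\subseteq \mathcal{F}_n.$$
   Context: All graphs are finite and simple. For integers $p\le q$, $[p,q]$ denotes $\{p,p+1,\dots,q\}$. For nonnegative integers $n,a,b$ with $n\ge a+b+5$, the graph $F_n(a,b)$ is defined as follows. Its vertex set is the disjoint union $I\cup A_1\cup A_2\cup B_1\cup B_2\cup C$, where $I=\{x\}$, $A_1=\{u_1,u_2\}$, $B_1=\{v_1,v_2\}$, $|A_2|=a$, $|B_2|=b$, $|C|=n-a-b-5$. Its edges are: all pairs between $A_1\cup A_2\cup C$ and $B_2$; all pairs between $A_2$ and $B_1$; all pairs between $x$ and $A_1\cup B_1\cup C$; and the two edges $u_1v_1$ and $u_2v_2$. There are no other edges. (Its number of edges is $b(n-b-3)+n+a-b+1$.) *)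

theory Defs
  imports Main
begin

(* The graph F_n(a,b), labelled on natural numbers:
   x = 0, A1 = {1,2} (u1 = 1, u2 = 2), B1 = {3,4} (v1 = 3, v2 = 4),
   A2 = [5, 5+a), B2 = [5+a, 5+a+b), C = [5+a+b, n).
   Edges of a simple graph are represented as 2-element sets. *)

definition FI :: "nat set" where "FI = {0}"
definition FA1 :: "nat set" where "FA1 = {1, 2}"
definition FB1 :: "nat set" where "FB1 = {3, 4}"
definition FA2 :: "nat \<Rightarrow> nat set" where "FA2 a = {5..<5+a}"
definition FB2 :: "nat \<Rightarrow> nat \<Rightarrow> nat set" where "FB2 a b = {5+a..<5+a+b}"
definition FC :: "nat \<Rightarrow> nat \<Rightarrow> nat \<Rightarrow> nat set" where "FC n a b = {5+a+b..<n}"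

definition F_vertices :: "nat \<Rightarrow> nat \<Rightarrow> nat \<Rightarrow> nat set" where
  "F_vertices n a b = FI \<union> FA1 \<union> FA2 a \<union> FB1 \<union> FB2 a b \<union> FC n a b"

definition F_edges :: "nat \<Rightarrow> nat \<Rightarrow> nat \<Rightarrow> nat set set" where
  "F_edges n a b =
      {{p, q} | p q. p \<in> FA1 \<union> FA2 a \<union> FC n a b \<and> q \<in> FB2 a b}
    \<union> {{p, q} | p q. p \<in> FA2 a \<and> q \<in> FB1}
    \<union> {{p, q} | p q. p \<in> FI \<and> q \<in> FA1 \<union> FB1 \<union> FC n a b}
    \<union> {{1, 3}, {2, 4}}"

definition F_counts :: "nat \<Rightarrow> nat set" where
  "F_counts n = {card (F_edges n a b) | a b. 2 \<le> b \<and> a + b + 5 \<le> n}"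

end

theory Submission
  imports Defs
begin

lemma card_pairs:
  assumes "finite X" "finite Y" "X \<inter> Y = {}"
  shows "card {{p,q} | p q. p \<in> X \<and> q \<in> Y} = card X * card Y"
proof -
  have eq: "{{p,q} | p q. p \<in> X \<and> q \<in> Y} = (\<lambda>(p,q). {p,q}) ` (X \<times> Y)" by auto
  have "inj_on (\<lambda>(p,q). {p,q}) (X \<times> Y)" using assms(3)
    by (auto simp: inj_on_def doubleton_eq_iff)
  then show ?thesis by (simp add: eq card_image card_cartesian_product)
qed

lemma card_F:
  assumes "a + b + 5 \<le> n"
  shows "card (F_edges n a b) = b*(n-b-3)+n+a-b+1"
proof -
  define P1 where "P1 = {{p, q} | p q. p \<in> FA1 \<union> FA2 a \<union> FC n a b \<and> q \<in> FB2 a b}"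
  define P2 where "P2 = {{p, q} | p q. p \<in> FA2 a \<and> q \<in> FB1}"
  define P3 where "P3 = {{p, q} | p q. p \<in> FI \<and> q \<in> FA1 \<union> FB1 \<union> FC n a b}"
  define P4 where "P4 = {{1::nat, 3}, {2, 4}}"
  have E: "F_edges n a b = P1 \<union> (P2 \<union> (P3 \<union> P4))"
    unfolding F_edges_def P1_def P2_def P3_def P4_def by blast
  have c1: "card P1 = (n-b-3) * b" unfolding P1_def
  proof (subst card_pairs)
    show "card (FA1 \<union> FA2 a \<union> FC n a b) * card (FB2 a b) = (n - b - 3) * b"
    proof -
      have "card (FA1 \<union> FA2 a \<union> FC n a b) = card FA1 + card (FA2 a) + card (FC n a b)"
        by (subst card_Un_disjoint, auto simp: FA1_def FA2_def FC_def card_Un_disjoint)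
      moreover have "n-b-3 = (n-(5+b)) + 2" using assms by simp
      ultimately show ?thesis using assms by (simp add: FA1_def FA2_def FC_def FB2_def algebra_simps)
    qed
  qed (auto simp: FA1_def FA2_def FC_def FB2_def)
  have c2: "card P2 = a * 2" unfolding P2_def
    by (subst card_pairs) (auto simp: FA2_def FB1_def)
  have c3: "card P3 = 1 * (n - a - b - 1)" unfolding P3_def
  proof (subst card_pairs)
    show "card FI * card (FA1 \<union> FB1 \<union> FC n a b) = 1 * (n - a - b - 1)"
    proof -
      have "card (FA1 \<union> FB1 \<union> FC n a b) = card FA1 + card FB1 + card (FC n a b)"
        by (subst card_Un_disjoint, auto simp: FA1_def FB1_def FC_def card_Un_disjoint)
      then show ?thesis using assms by (simp add: FA1_def FB1_def FC_def FI_def)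
    qed
  qed (auto simp: FI_def FA1_def FB1_def FC_def)
  have c4: "card P4 = 2" unfolding P4_def by (simp add: doubleton_eq_iff)
  have fP1: "finite P1" unfolding P1_def
    by (rule finite_subset[of _ "(\<lambda>(p,q). {p,q}) ` ((FA1 \<union> FA2 a \<union> FC n a b) \<times> FB2 a b)"])
       (auto simp: FA1_def FA2_def FC_def FB2_def)
  have fP2: "finite P2" unfolding P2_def
    by (rule finite_subset[of _ "(\<lambda>(p,q). {p,q}) ` (FA2 a \<times> FB1)"])
       (auto simp: FA2_def FB1_def)
  have fP3: "finite P3" unfolding P3_def
    by (rule finite_subset[of _ "(\<lambda>(p,q). {p,q}) ` (FI \<times> (FA1 \<union> FB1 \<union> FC n a b))"])
       (auto simp: FI_def FA1_def FB1_def FC_def)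
  have fP4: "finite P4" unfolding P4_def by simp
  have h1: "\<forall>e\<in>P1. e \<inter> FB2 a b \<noteq> {}" unfolding P1_def by auto
  have h2: "\<forall>e\<in>P2 \<union> P3 \<union> P4. e \<inter> FB2 a b = {}"
  proof
    fix e assume "e \<in> P2 \<union> P3 \<union> P4"
    then consider "e \<in> P2" | "e \<in> P3" | "e \<in> P4" by blast
    then show "e \<inter> FB2 a b = {}"
    proof cases
      case 1
      then obtain p q where "e = {p,q}" "p \<in> FA2 a" "q \<in> FB1" unfolding P2_def by blast
      then show ?thesis by (auto simp: FA2_def FB1_def FB2_def)
    next
      case 2
      then obtain p q where "e = {p,q}" "p \<in> FI" "q \<in> FA1 \<union> FB1 \<union> FC n a b" unfolding P3_def by blast
      then show ?thesis by (auto simp: FI_def FA1_def FB1_def FB2_def FC_def)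
    next
      case 3
      then show ?thesis by (auto simp: P4_def FB2_def)
    qed
  qed
  have d1: "P1 \<inter> (P2 \<union> (P3 \<union> P4)) = {}" using h1 h2 by blast
  have h3: "\<forall>e\<in>P3. 0 \<in> e" unfolding P3_def by (auto simp: FI_def)
  have h4: "\<forall>e\<in>P2 \<union> P4. 0 \<notin> e"
  proof
    fix e assume "e \<in> P2 \<union> P4"
    then consider "e \<in> P2" | "e \<in> P4" by blast
    then show "0 \<notin> e"
    proof cases
      case 1
      then obtain p q where "e = {p,q}" "p \<in> FA2 a" "q \<in> FB1" unfolding P2_def by blast
      then show ?thesis by (auto simp: FA2_def FB1_def)
    next
      case 2
      then show ?thesis by (auto simp: P4_def)
    qed
  qed
  have h5: "\<forall>e\<in>P2. \<exists>x\<in>e. x \<ge> 5" unfolding P2_def by (auto simp: FA2_def)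
  have h6: "\<forall>e\<in>P4. \<forall>x\<in>e. x < 5" unfolding P4_def by auto
  have d2a: "P2 \<inter> P3 = {}" using h3 h4 by blast
  have d2b: "P2 \<inter> P4 = {}" using h5 h6 by fastforce
  have d2: "P2 \<inter> (P3 \<union> P4) = {}" using d2a d2b by blast
  have d3: "P3 \<inter> P4 = {}" using h3 h4 by blast
  have "card (F_edges n a b) = card P1 + (card P2 + (card P3 + card P4))"
    unfolding E using fP1 fP2 fP3 fP4 d1 d2 d3
    by (simp add: card_Un_disjoint)
  also have "\<dots> = b*(n-b-3)+n+a-b+1" using assms c1 c2 c3 c4 by (simp add: algebra_simps)
  finally show ?thesis .
qed

lemma cover:
  fixes B n m :: nat
  assumes "2 \<le> B" "2*B+5 \<le> n" "3*n-11 \<le> m" "m \<le> B*(n-B-5)+2*n-4"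
  shows "\<exists>a b. 2\<le>b \<and> a+b+5\<le>n \<and> m = b*(n-b-3)+n+a-b+1"
  using assms
proof (induction B arbitrary: m rule: dec_induct)
  case base
  obtain N where N: "n = N + 9" using base by (intro that[of "n-9"]) simp
  show ?case
  proof (intro exI conjI)
    show "(m - (3*n-11)) + 2 + 5 \<le> n" using base N by (simp add: algebra_simps)
    show "m = 2 * (n - 2 - 3) + n + (m - (3*n-11)) - 2 + 1" using base N by (simp add: algebra_simps)
  qed simp
next
  case (step B)
  obtain N where N: "n = N + 2*B + 7" using step.prems by (intro that[of "n - 2*B - 7"]) simp
  show ?case
  proof (cases "m \<le> B*(n-B-5)+2*n-4")
    case True
    then show ?thesis using step by simp
  next
    case False
    have t1: "B*(n-B-5)+2*n-4 = B*(N+B+2)+2*N+4*B+10" using N by (simp add: algebra_simps)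
    have t2: "Suc B*(n-Suc B-5)+2*n-4 = (B+1)*(N+B+1)+2*N+4*B+10" using N by (simp add: algebra_simps)
    define g where "g = (B+1)*(N+B+3)+N+B+7"
    have gle: "g \<le> m" using False t1 unfolding g_def by (simp add: algebra_simps)
    have mle: "m \<le> g + (N+B+1)" using step.prems(3) t2 unfolding g_def by (simp add: algebra_simps)
    show ?thesis
    proof (intro exI conjI)
      show "2 \<le> Suc B" using step by simp
      show "(m-g) + Suc B + 5 \<le> n" using N gle mle by simp
      have "Suc B * (n - Suc B - 3) + n + (m-g) - Suc B + 1 = (B+1)*(N+B+3) + N+B+7 + (m-g)"
        using N by (simp add: algebra_simps)
      then show "m = Suc B * (n - Suc B - 3) + n + (m-g) - Suc B + 1" using gle unfolding g_def by simp
    qed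
  qed
qed

theorem lemma2p3:
  fixes n :: nat
  assumes "n \<ge> 10"
  shows "{3 * n - 11 .. ((n - 1) div 2) * (n div 2) + 2} \<subseteq> F_counts n"
proof
  fix m assume m: "m \<in> {3 * n - 11 .. ((n - 1) div 2) * (n div 2) + 2}"
  define B where "B = (n-5) div 2"
  have top: "((n - 1) div 2) * (n div 2) + 2 \<le> B*(n-B-5)+2*n-4"
  proof (cases "even n")
    case True
    then obtain j where j: "n = 2*j + 10" using assms by (intro that[of "(n-10) div 2"]) presburger
    have "B = j + 2" using j unfolding B_def by simp
    moreover have "(n-1) div 2 = j + 4" "n div 2 = j + 5" using j by auto
    ultimately show ?thesis using j by (simp add: algebra_simps)
  next
    case False
    then obtain j where j: "n = 2*j + 11" using assms by (intro that[of "(n-11) div 2"]) presburger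
    have "B = j + 3" using j unfolding B_def by simp
    moreover have "(n-1) div 2 = j + 5" "n div 2 = j + 5" using j by auto
    ultimately show ?thesis using j by (simp add: algebra_simps)
  qed
  have "\<exists>a b. 2\<le>b \<and> a+b+5\<le>n \<and> m = b*(n-b-3)+n+a-b+1"
  proof (rule cover[of B])
    show "2 \<le> B" using assms unfolding B_def by linarith
    show "2*B+5 \<le> n" using assms unfolding B_def by linarith
  qed (use m top in auto)
  then obtain a b where ab: "2\<le>b" "a+b+5\<le>n" "m = b*(n-b-3)+n+a-b+1" by blast
  have "m = card (F_edges n a b)" using card_F[OF ab(2)] ab(3) by simp
  then show "m \<in> F_counts n" unfolding F_counts_def using ab(1,2) by blast
qed

end
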